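(* Let $A^T\in\mathbb{R}^{n_o\times n}$, $G\in\mathbb{R}^{n\times n_h}$, $B^T\in\mathbb{R}^{n\times n}$ be the Toom-Cook matrices defined in the context, let $H\in F^{n_h\times n_h}$ and $X\in F^{n\times n}$ be floating point matrices, let $S=A^T(GHG^T\odot B^TXB)A$ be the exact result and $\hat S$ the floating point result computed as described in the context. Then $$|\hat S-S|\le |A^T|\big(|G|\,|H|\,|G^T|\odot|B^T|\,|X|\,|B|\big)|A|\,\big(2\alpha^{(n)}+2\beta^{(n)}+2\gamma^{(n_h)}+1\big)\varepsilon+O(\varepsilon^2)$$ entrywise, and $$\|\hat S-S\|_1\le \|A^T\|_1\|G\|_F\|H\|_F\|G^T\|_F\|B^T\|_F\|X\|_F\|B\|_F\|A\|_1\,\big(2\alpha^{(n)}+2\beta^{(n)}+2\gamma^{(n_h)}+1\big)\varepsilon+O(\varepsilon^2).$$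
   Context: Toom-Cook matrices: $n=n_o+n_h-1$, $p_1,\dots,p_n$ distinct reals, $N_i=1/\prod_{j\ne i}(p_i-p_j)$, $M_{i,j}$ the coefficient of $a^{j-1}$ in $\prod_{k\ne i}(a-p_k)$; $A^T_{i,j}=p_j^{i-1}$ ($i\le n_o$, $j\le n$), $G_{i,j}=p_i^{j-1}N_i$ ($i\le n$, $j\le n_h$), $B^T_{i,j}=M_{j,i}$; $A$, $G^T$, $B$ are the transposes. $\odot$ is the Hadamard product, $|\cdot|$ entrywise absolute value (matrix inequalities entrywise), $\|\cdot\|_1$ the induced matrix 1-norm (maximum absolute column sum), $\|\cdot\|_F$ the Frobenius norm. Floating point model: set $F$ of floating point numbers, unit roundoff $\varepsilon$, no overflow, $fl(y)=y(1+\delta)$, $fl(y\,\mathrm{op}\,z)=(y\,\mathrm{op}\,z)(1+\delta)$ with $|\delta|\le\varepsilon$; the matrix entries are stored rounded. Computation of $\hat S$: $U=fl(fl(G)\,H\,fl(G^T))$ and $V=fl(fl(B^T)\,X\,fl(B))$ are computed by matrix products (dot products of rows/columns), $W_{ij}=fl(U_{ij}V_{ij})$, and $\hat S=fl(fl(A^T)\,W\,fl(A))$. The same summation method is used for multiplication by a matrix and by its transpose. Constants: $\alpha^{(n)},\beta^{(n)},\gamma^{(n_h)}$ are constants such that for every row $a^T$ of $A^T$ (resp. $B^T$, resp. $G$) — equivalently every column of $A$ (resp. $B$, $G^T$) — and every floating point vector $y$ of matching length the computed dot product satisfies $|a^Ty-fl(fl(a^T)y)|\le|a^T|\,|y|\,c\,\varepsilon+O(\varepsilon^2)$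 with $c=\alpha^{(n)}$ (resp. $\beta^{(n)}$, $\gamma^{(n_h)}$). *)

theory Defs
  imports "HOL-Computational_Algebra.Polynomial"
begin

text \<open>Matrices are functions nat => nat => real with indices starting at 0;
  the dimensions are carried explicitly.  Index i of the paper corresponds to i-1 here.\<close>

definition mmul :: "nat \<Rightarrow> (nat \<Rightarrow> nat \<Rightarrow> real) \<Rightarrow> (nat \<Rightarrow> nat \<Rightarrow> real) \<Rightarrow> nat \<Rightarrow> nat \<Rightarrow> real" where
  "mmul k P Q i j = (\<Sum>l<k. P i l * Q l j)"

definition mabs :: "(nat \<Rightarrow> nat \<Rightarrow> real) \<Rightarrow> nat \<Rightarrow> nat \<Rightarrow> real" where
  "mabs P i j = \<bar>P i j\<bar>"

definition hprod :: "(nat \<Rightarrow> nat \<Rightarrow> real) \<Rightarrow> (nat \<Rightarrow> nat \<Rightarrow> real) \<Rightarrow> nat \<Rightarrow> nat \<Rightarrow> real" where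
  "hprod P Q i j = P i j * Q i j"

definition mtransp :: "(nat \<Rightarrow> nat \<Rightarrow> real) \<Rightarrow> nat \<Rightarrow> nat \<Rightarrow> real" where
  "mtransp P i j = P j i"

text \<open>Induced matrix 1-norm (maximum absolute column sum) of an m x k matrix, k >= 1.\<close>
definition norm1 :: "nat \<Rightarrow> nat \<Rightarrow> (nat \<Rightarrow> nat \<Rightarrow> real) \<Rightarrow> real" where
  "norm1 m k P = Max ((\<lambda>j. \<Sum>i<m. \<bar>P i j\<bar>) ` {..<k})"

definition frob :: "nat \<Rightarrow> nat \<Rightarrow> (nat \<Rightarrow> nat \<Rightarrow> real) \<Rightarrow> real" where
  "frob m k P = sqrt (\<Sum>i<m. \<Sum>j<k. (P i j)^2)"

definition tcN :: "nat \<Rightarrow> (nat \<Rightarrow> real) \<Rightarrow> nat \<Rightarrow> real" where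
  "tcN n p i = 1 / (\<Prod>j\<in>{..<n} - {i}. (p i - p j))"

definition tcM :: "nat \<Rightarrow> (nat \<Rightarrow> real) \<Rightarrow> nat \<Rightarrow> nat \<Rightarrow> real" where
  "tcM n p i j = coeff (\<Prod>k\<in>{..<n} - {i}. [:- p k, 1:]) j"

text \<open>A^T (n_o x n), G (n x n_h), B^T (n x n).\<close>
definition tcAT :: "(nat \<Rightarrow> real) \<Rightarrow> nat \<Rightarrow> nat \<Rightarrow> real" where
  "tcAT p i j = p j ^ i"

definition tcG :: "nat \<Rightarrow> (nat \<Rightarrow> real) \<Rightarrow> nat \<Rightarrow> nat \<Rightarrow> real" where
  "tcG n p i j = p i ^ j * tcN n p i"

definition tcBT :: "nat \<Rightarrow> (nat \<Rightarrow> real) \<Rightarrow> nat \<Rightarrow> nat \<Rightarrow> real" where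
  "tcBT n p i j = tcM n p j i"

text \<open>dot m u y : the computed (floating point) dot product of the stored vectors u and y
  of length m, with the fixed summation method.  rnd : rounding to the floating point set.
  flmul_left computes fl(fl(C) Y) (C has inner dimension m, its rows are the dot product
  coefficient vectors); flmul_right computes fl(Y fl(C)) (the columns of C are the
  coefficient vectors; the same summation method is used).\<close>

definition flmul_left :: "(nat \<Rightarrow> (nat \<Rightarrow> real) \<Rightarrow> (nat \<Rightarrow> real) \<Rightarrow> real) \<Rightarrow> (real \<Rightarrow> real) \<Rightarrow> nat
    \<Rightarrow> (nat \<Rightarrow> nat \<Rightarrow> real) \<Rightarrow> (nat \<Rightarrow> nat \<Rightarrow> real) \<Rightarrow> nat \<Rightarrow> nat \<Rightarrow> real" where
  "flmul_left dot rnd m C Y i j = dot m (\<lambda>k. rnd (C i k)) (\<lambda>k. Y k j)"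

definition flmul_right :: "(nat \<Rightarrow> (nat \<Rightarrow> real) \<Rightarrow> (nat \<Rightarrow> real) \<Rightarrow> real) \<Rightarrow> (real \<Rightarrow> real) \<Rightarrow> nat
    \<Rightarrow> (nat \<Rightarrow> nat \<Rightarrow> real) \<Rightarrow> (nat \<Rightarrow> nat \<Rightarrow> real) \<Rightarrow> nat \<Rightarrow> nat \<Rightarrow> real" where
  "flmul_right dot rnd m Y C i j = dot m (\<lambda>k. rnd (C k j)) (\<lambda>k. Y i k)"

definition tc_exact :: "nat \<Rightarrow> nat \<Rightarrow> (nat \<Rightarrow> real) \<Rightarrow> (nat \<Rightarrow> nat \<Rightarrow> real) \<Rightarrow> (nat \<Rightarrow> nat \<Rightarrow> real)
    \<Rightarrow> nat \<Rightarrow> nat \<Rightarrow> real" where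
  "tc_exact no nh p H X =
    (let n = no + nh - 1; AT = tcAT p; G = tcG n p; BT = tcBT n p in
     mmul n (mmul n AT (hprod (mmul nh (mmul nh G H) (mtransp G)) (mmul n (mmul n BT X) (mtransp BT))))
       (mtransp AT))"

definition tc_computed :: "(nat \<Rightarrow> (nat \<Rightarrow> real) \<Rightarrow> (nat \<Rightarrow> real) \<Rightarrow> real) \<Rightarrow> (real \<Rightarrow> real)
    \<Rightarrow> nat \<Rightarrow> nat \<Rightarrow> (nat \<Rightarrow> real) \<Rightarrow> (nat \<Rightarrow> nat \<Rightarrow> real) \<Rightarrow> (nat \<Rightarrow> nat \<Rightarrow> real) \<Rightarrow> nat \<Rightarrow> nat \<Rightarrow> real" where
  "tc_computed dot rnd no nh p H X =
    (let n = no + nh - 1; AT = tcAT p; G = tcG n p; BT = tcBT n p;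
         U = flmul_right dot rnd nh (flmul_left dot rnd nh G H) (mtransp G);
         V = flmul_right dot rnd n (flmul_left dot rnd n BT X) (mtransp BT);
         W = (\<lambda>i j. rnd (U i j * V i j))
     in flmul_right dot rnd n (flmul_left dot rnd n AT W) (mtransp AT))"

end

theory Submission
  imports Defs "HOL-Analysis.Analysis"
begin


definition okE :: "real set \<Rightarrow> (real \<Rightarrow> real) \<Rightarrow> real \<Rightarrow> bool" where
  "okE E f c \<longleftrightarrow> (\<exists>K e0. 0 < e0 \<and> (\<forall>e\<in>E. e \<le> e0 \<longrightarrow> f e \<le> c * e + K * e\<^sup>2))"

lemma okE_add:
  assumes "okE E f c" "okE E g d"
  shows "okE E (\<lambda>e. f e + g e) (c + d)"
proof -
  obtain K1 a where 1: "0 < a" "\<forall>e\<in>E. e \<le> a \<longrightarrow> f e \<le> c * e + K1 * e\<^sup>2" using assms(1) okE_def by auto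
  obtain K2 b where 2: "0 < b" "\<forall>e\<in>E. e \<le> b \<longrightarrow> g e \<le> d * e + K2 * e\<^sup>2" using assms(2) okE_def by auto
  show ?thesis unfolding okE_def
    apply (rule exI[of _ "K1+K2"], rule exI[of _ "min a b"])
    using 1 2 by (auto simp: algebra_simps) (smt (verit))
qed

lemma okE_zero: "okE E (\<lambda>e. 0) 0"
  unfolding okE_def by (rule exI[of _ 0], rule exI[of _ 1]) auto

lemma okE_sum:
  fixes m :: nat
  assumes "\<And>k. k < m \<Longrightarrow> okE E (f k) (c k)"
  shows "okE E (\<lambda>e. \<Sum>k<m. f k e) (\<Sum>k<m. c k)"
  using assms
proof (induction m)
  case 0 then show ?case using okE_zero by simp
next
  case (Suc m)
  have "okE E (\<lambda>e. (\<Sum>k<m. f k e) + f m e) ((\<Sum>k<m. c k) + c m)"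
    by (rule okE_add) (use Suc in auto)
  then show ?case by simp
qed

lemma okE_cmult:
  assumes "0 \<le> a" "okE E f c"
  shows "okE E (\<lambda>e. a * f e) (a * c)"
proof -
  obtain K1 b where 1: "0 < b" "\<forall>e\<in>E. e \<le> b \<longrightarrow> f e \<le> c * e + K1 * e\<^sup>2" using assms(2) okE_def by auto
  show ?thesis unfolding okE_def
  proof (rule exI[of _ "a*K1"], rule exI[of _ b], safe)
    fix e assume "e \<in> E" "e \<le> b"
    then have "a * f e \<le> a * (c * e + K1 * e\<^sup>2)" using 1 assms(1) mult_left_mono by blast
    then show "a * f e \<le> a * c * e + a * K1 * e\<^sup>2" by (simp add: algebra_simps)
  qed (use 1 in auto)
qed

lemma okE_mono:
  assumes "\<forall>e\<in>E. f e \<le> g e" "okE E g c"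
  shows "okE E f c"
  using assms unfolding okE_def by (meson order_trans)

lemma okE_weaken:
  assumes "\<forall>e\<in>E. 0 < e" "c \<le> c'" "okE E f c"
  shows "okE E f c'"
proof -
  obtain K1 b where 1: "0 < b" "\<forall>e\<in>E. e \<le> b \<longrightarrow> f e \<le> c * e + K1 * e\<^sup>2" using assms(3) okE_def by auto
  show ?thesis unfolding okE_def
  proof (rule exI[of _ K1], rule exI[of _ b], safe)
    fix e assume "e \<in> E" "e \<le> b"
    moreover have "c * e \<le> c' * e" using assms(1,2) \<open>e\<in>E\<close> by (simp add: mult_right_mono)
    ultimately show "f e \<le> c' * e + K1 * e\<^sup>2" using 1 by force
  qed (use 1 in auto)
qed

lemma okE_cong:
  assumes "okE E f c" "c = c'" shows "okE E f c'" using assms by simp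

lemma okE_quad:
  assumes "0 < b" "\<forall>e\<in>E. e \<le> b \<longrightarrow> f e \<le> K * e\<^sup>2"
  shows "okE E f 0"
  unfolding okE_def using assms by auto

lemma okE_lin: "okE E (\<lambda>e. c * e) c"
  unfolding okE_def by (rule exI[of _ 0], rule exI[of _ 1]) auto

definition smallE :: "real set \<Rightarrow> (real \<Rightarrow> real) \<Rightarrow> bool" where
  "smallE E f \<longleftrightarrow> (\<exists>K b. 0 < b \<and> 0 \<le> K \<and> (\<forall>e\<in>E. e \<le> b \<longrightarrow> f e \<le> K * e))"

lemma okE_small:
  assumes "\<forall>e\<in>E. 0 < e" "okE E f c"
  shows "smallE E f"
proof -
  obtain K1 b where 1: "0 < b" "\<forall>e\<in>E. e \<le> b \<longrightarrow> f e \<le> c * e + K1 * e\<^sup>2" using assms(2) okE_def by auto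
  show ?thesis unfolding smallE_def
  proof (rule exI[of _ "\<bar>c\<bar> + \<bar>K1\<bar>"], rule exI[of _ "min b 1"], safe)
    fix e assume e: "e \<in> E" "e \<le> min b 1"
    have ep: "0 < e" using assms(1) e by auto
    have "c * e \<le> \<bar>c\<bar> * e" using ep by (simp add: mult_right_mono)
    moreover have "K1 * e\<^sup>2 \<le> \<bar>K1\<bar> * e"
    proof -
      have "K1 * e\<^sup>2 \<le> \<bar>K1\<bar> * e\<^sup>2" by (simp add: mult_right_mono)
      also have "\<dots> \<le> \<bar>K1\<bar> * e" using ep e by (simp add: mult_left_mono power2_eq_square mult_le_cancel_right1)
      finally show ?thesis .
    qed
    ultimately show "f e \<le> (\<bar>c\<bar> + \<bar>K1\<bar>) * e" using 1 e by (auto simp: algebra_simps)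
  qed (use 1 in auto)
qed


lemma dot_step:
  fixes E :: "real set" and Fl :: "real \<Rightarrow> real set" and D :: "real \<Rightarrow> (nat \<Rightarrow> real) \<Rightarrow> real"
  assumes pos: "\<forall>e\<in>E. 0 < e"
    and hyp: "\<exists>K e0. 0 < e0 \<and> (\<forall>e\<in>E. e \<le> e0 \<longrightarrow> (\<forall>y. (\<forall>k<m. y k \<in> Fl e) \<longrightarrow>
          \<bar>(\<Sum>k<m. a k * y k) - D e y\<bar> \<le> (\<Sum>k<m. \<bar>a k\<bar> * \<bar>y k\<bar>) * (c * e + K * e\<^sup>2)))"
    and c0: "0 \<le> c"
    and yfl: "\<forall>e\<in>E. \<forall>k<m. y e k \<in> Fl e"
    and yerr: "\<And>k. k < m \<Longrightarrow> okE E (\<lambda>e. \<bar>y e k - ys k\<bar>) (d k)"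
  shows "okE E (\<lambda>e. \<bar>D e (y e) - (\<Sum>k<m. a k * ys k)\<bar>) (\<Sum>k<m. \<bar>a k\<bar> * (c * \<bar>ys k\<bar> + d k))"
proof -
  define s where "s e = (\<Sum>k<m. \<bar>a k\<bar> * \<bar>y e k - ys k\<bar>)" for e
  have oks: "okE E s (\<Sum>k<m. \<bar>a k\<bar> * d k)"
    unfolding s_def by (rule okE_sum, rule okE_cmult) (auto intro: yerr)
  then obtain Ks bs where sm: "0 < bs" "0 \<le> Ks" "\<forall>e\<in>E. e \<le> bs \<longrightarrow> s e \<le> Ks * e"
    using okE_small[OF pos] smallE_def by blast
  obtain K e0 where h: "0 < e0" "\<forall>e\<in>E. e \<le> e0 \<longrightarrow> (\<forall>y. (\<forall>k<m. y k \<in> Fl e) \<longrightarrow>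
          \<bar>(\<Sum>k<m. a k * y k) - D e y\<bar> \<le> (\<Sum>k<m. \<bar>a k\<bar> * \<bar>y k\<bar>) * (c * e + K * e\<^sup>2))"
    using hyp by auto
  define A where "A = (\<Sum>k<m. \<bar>a k\<bar> * \<bar>ys k\<bar>)"
  have A0: "0 \<le> A" unfolding A_def by (auto intro: sum_nonneg)
  have ok1: "okE E (\<lambda>e. \<bar>(\<Sum>k<m. a k * y e k) - D e (y e)\<bar>) (A * c)"
    unfolding okE_def
  proof (rule exI[of _ "A * \<bar>K\<bar> + Ks * (c + \<bar>K\<bar>)"], rule exI[of _ "min e0 (min bs 1)"], safe)
    fix e assume e: "e \<in> E" "e \<le> min e0 (min bs 1)"
    have ep: "0 < e" using pos e by auto
    have e1: "e \<le> 1" using e by auto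
    have "\<bar>(\<Sum>k<m. a k * y e k) - D e (y e)\<bar> \<le> (\<Sum>k<m. \<bar>a k\<bar> * \<bar>y e k\<bar>) * (c * e + K * e\<^sup>2)"
      using h e yfl by auto
    also have "\<dots> \<le> (\<Sum>k<m. \<bar>a k\<bar> * \<bar>y e k\<bar>) * (c * e + \<bar>K\<bar> * e\<^sup>2)"
      by (rule mult_left_mono) (auto intro: sum_nonneg mult_right_mono)
    also have "\<dots> \<le> (A + s e) * (c * e + \<bar>K\<bar> * e\<^sup>2)"
    proof (rule mult_right_mono)
      have "(\<Sum>k<m. \<bar>a k\<bar> * \<bar>y e k\<bar>) \<le> (\<Sum>k<m. \<bar>a k\<bar> * \<bar>ys k\<bar> + \<bar>a k\<bar> * \<bar>y e k - ys k\<bar>)"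
        by (rule sum_mono) (simp add: distrib_left[symmetric] mult_left_mono)
      then show "(\<Sum>k<m. \<bar>a k\<bar> * \<bar>y e k\<bar>) \<le> A + s e" by (simp add: A_def s_def sum.distrib)
      show "0 \<le> c * e + \<bar>K\<bar> * e\<^sup>2" using c0 ep by auto
    qed
    also have "\<dots> = A * c * e + A * \<bar>K\<bar> * e\<^sup>2 + s e * (c * e + \<bar>K\<bar> * e\<^sup>2)"
      by (simp add: algebra_simps)
    also have "s e * (c * e + \<bar>K\<bar> * e\<^sup>2) \<le> (Ks * e) * (c * e + \<bar>K\<bar> * e)"
    proof (rule mult_mono)
      show "s e \<le> Ks * e" using sm e by auto
      show "c * e + \<bar>K\<bar> * e\<^sup>2 \<le> c * e + \<bar>K\<bar> * e"
        using ep e1 by (simp add: mult_left_mono power2_eq_square)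
      show "0 \<le> Ks * e" using sm ep by auto
      show "0 \<le> c * e + \<bar>K\<bar> * e\<^sup>2" using c0 ep by auto
    qed
    also have "(Ks * e) * (c * e + \<bar>K\<bar> * e) = Ks * (c + \<bar>K\<bar>) * e\<^sup>2"
      by (simp add: algebra_simps power2_eq_square)
    finally show "\<bar>(\<Sum>k<m. a k * y e k) - D e (y e)\<bar> \<le> A * c * e + (A * \<bar>K\<bar> + Ks * (c + \<bar>K\<bar>)) * e\<^sup>2"
      by (simp add: algebra_simps)
  qed (use h sm in auto)
  have ok2: "okE E (\<lambda>e. \<bar>(\<Sum>k<m. a k * y e k) - D e (y e)\<bar> + s e) (A * c + (\<Sum>k<m. \<bar>a k\<bar> * d k))"
    by (rule okE_add[OF ok1 oks])
  have bnd: "\<bar>D e (y e) - (\<Sum>k<m. a k * ys k)\<bar> \<le> \<bar>(\<Sum>k<m. a k * y e k) - D e (y e)\<bar> + s e" for e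
  proof -
    have "\<bar>(\<Sum>k<m. a k * y e k) - (\<Sum>k<m. a k * ys k)\<bar> = \<bar>\<Sum>k<m. a k * (y e k - ys k)\<bar>"
      by (simp add: sum_subtractf algebra_simps)
    also have "\<dots> \<le> (\<Sum>k<m. \<bar>a k * (y e k - ys k)\<bar>)" by (rule sum_abs)
    also have "\<dots> = s e" by (simp add: s_def abs_mult)
    finally show ?thesis by linarith
  qed
  have "okE E (\<lambda>e. \<bar>D e (y e) - (\<Sum>k<m. a k * ys k)\<bar>) (A * c + (\<Sum>k<m. \<bar>a k\<bar> * d k))"
    by (rule okE_mono[OF _ ok2]) (use bnd in auto)
  moreover have "A * c + (\<Sum>k<m. \<bar>a k\<bar> * d k) = (\<Sum>k<m. \<bar>a k\<bar> * (c * \<bar>ys k\<bar> + d k))"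
    by (simp add: A_def sum_distrib_left sum.distrib algebra_simps)
  ultimately show ?thesis by simp
qed




lemma prod_step:
  fixes fl :: "real \<Rightarrow> real \<Rightarrow> real"
  assumes pos: "\<forall>e\<in>E. 0 < e"
    and flm: "\<forall>e\<in>E. \<forall>z. \<bar>fl e z - z\<bar> \<le> e * \<bar>z\<bar>"
    and ou: "okE E (\<lambda>e. \<bar>u e - us\<bar>) cu"
    and ov: "okE E (\<lambda>e. \<bar>v e - vs\<bar>) cv"
  shows "okE E (\<lambda>e. \<bar>fl e (u e * v e) - us * vs\<bar>) (\<bar>us * vs\<bar> + \<bar>us\<bar> * cv + \<bar>vs\<bar> * cu)"
proof -
  obtain Ku bu where su: "0 < bu" "0 \<le> Ku" "\<forall>e\<in>E. e \<le> bu \<longrightarrow> \<bar>u e - us\<bar> \<le> Ku * e"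
    using okE_small[OF pos ou] unfolding smallE_def by auto
  obtain Kv bv where sv: "0 < bv" "0 \<le> Kv" "\<forall>e\<in>E. e \<le> bv \<longrightarrow> \<bar>v e - vs\<bar> \<le> Kv * e"
    using okE_small[OF pos ov] unfolding smallE_def by auto
  define R where "R e = \<bar>u e - us\<bar> * \<bar>v e - vs\<bar> + e * (\<bar>us\<bar> * \<bar>v e - vs\<bar> + \<bar>vs\<bar> * \<bar>u e - us\<bar> + \<bar>u e - us\<bar> * \<bar>v e - vs\<bar>)" for e
  have bnd: "\<bar>fl e (u e * v e) - us * vs\<bar> \<le> e * \<bar>us * vs\<bar> + \<bar>us\<bar> * \<bar>v e - vs\<bar> + \<bar>vs\<bar> * \<bar>u e - us\<bar> + R e"
    if e: "e \<in> E" for e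
  proof -
    define X where "X = \<bar>us\<bar> * \<bar>v e - vs\<bar> + \<bar>vs\<bar> * \<bar>u e - us\<bar> + \<bar>u e - us\<bar> * \<bar>v e - vs\<bar>"
    have "u e * v e - us * vs = us * (v e - vs) + vs * (u e - us) + (u e - us) * (v e - vs)"
      by (simp add: algebra_simps)
    moreover have "\<bar>p + q + r\<bar> \<le> \<bar>p\<bar> + \<bar>q\<bar> + \<bar>r\<bar>" for p q r :: real by arith
    ultimately have X: "\<bar>u e * v e - us * vs\<bar> \<le> X"
      unfolding X_def by (metis abs_mult)
    have ep: "0 < e" using pos e by auto
    have "\<bar>fl e (u e * v e) - us * vs\<bar> \<le> \<bar>fl e (u e * v e) - u e * v e\<bar> + \<bar>u e * v e - us * vs\<bar>" by linarith
    also have "\<dots> \<le> e * \<bar>u e * v e\<bar> + X" using flm e X by (meson add_mono)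
    also have "e * \<bar>u e * v e\<bar> \<le> e * (\<bar>us * vs\<bar> + X)"
      using X ep by (intro mult_left_mono) linarith+
    finally show ?thesis unfolding R_def X_def by (simp add: algebra_simps)
  qed
  have okR: "okE E R 0"
  proof (rule okE_quad[of "min 1 (min bu bv)" _ _ "Ku * Kv + \<bar>us\<bar> * Kv + \<bar>vs\<bar> * Ku + Ku * Kv"], safe)
    fix e assume e: "e \<in> E" "e \<le> min 1 (min bu bv)"
    have ep: "0 < e" using pos e by auto
    have du: "\<bar>u e - us\<bar> \<le> Ku * e" and dv: "\<bar>v e - vs\<bar> \<le> Kv * e" using su sv e by auto
    have a: "\<bar>u e - us\<bar> * \<bar>v e - vs\<bar> \<le> (Ku * e) * (Kv * e)" using du dv by (simp add: mult_mono)
    have b: "\<bar>us\<bar> * \<bar>v e - vs\<bar> + \<bar>vs\<bar> * \<bar>u e - us\<bar> + \<bar>u e - us\<bar> * \<bar>v e - vs\<bar>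
        \<le> \<bar>us\<bar> * Kv * e + \<bar>vs\<bar> * Ku * e + (Ku * e) * (Kv * e)"
    proof -
      have "\<bar>us\<bar> * \<bar>v e - vs\<bar> \<le> \<bar>us\<bar> * (Kv * e)" using dv by (simp add: mult_left_mono)
      moreover have "\<bar>vs\<bar> * \<bar>u e - us\<bar> \<le> \<bar>vs\<bar> * (Ku * e)" using du by (simp add: mult_left_mono)
      ultimately show ?thesis using a by (simp add: algebra_simps)
    qed
    have c: "(Ku * e) * (Kv * e) \<le> Ku * Kv * e"
    proof -
      have "(Ku * e) * (Kv * e) = (Ku * Kv * e) * e" by (simp add: algebra_simps)
      also have "\<dots> \<le> (Ku * Kv * e) * 1" using e ep su sv by (intro mult_left_mono) auto
      finally show ?thesis by simp
    qed
    have "R e \<le> (Ku * e) * (Kv * e) + e * (\<bar>us\<bar> * Kv * e + \<bar>vs\<bar> * Ku * e + Ku * Kv * e)"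
    proof -
      have "e * (\<bar>us\<bar> * \<bar>v e - vs\<bar> + \<bar>vs\<bar> * \<bar>u e - us\<bar> + \<bar>u e - us\<bar> * \<bar>v e - vs\<bar>)
         \<le> e * (\<bar>us\<bar> * Kv * e + \<bar>vs\<bar> * Ku * e + Ku * Kv * e)"
        using b c ep by (intro mult_left_mono) auto
      then show ?thesis unfolding R_def using a by linarith
    qed
    then show "R e \<le> (Ku * Kv + \<bar>us\<bar> * Kv + \<bar>vs\<bar> * Ku + Ku * Kv) * e\<^sup>2"
      by (simp add: algebra_simps power2_eq_square)
  qed (use su sv in simp)
  have o2: "okE E (\<lambda>e. \<bar>us\<bar> * \<bar>v e - vs\<bar>) (\<bar>us\<bar> * cv)" by (rule okE_cmult) (simp_all add: ov)
  have o3: "okE E (\<lambda>e. \<bar>vs\<bar> * \<bar>u e - us\<bar>) (\<bar>vs\<bar> * cu)" by (rule okE_cmult) (simp_all add: ou)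
  have "okE E (\<lambda>e. \<bar>us * vs\<bar> * e + \<bar>us\<bar> * \<bar>v e - vs\<bar> + \<bar>vs\<bar> * \<bar>u e - us\<bar> + R e)
          (\<bar>us * vs\<bar> + \<bar>us\<bar> * cv + \<bar>vs\<bar> * cu + 0)"
    by (rule okE_add[OF okE_add[OF okE_add[OF okE_lin o2] o3] okR])
  then have "okE E (\<lambda>e. \<bar>fl e (u e * v e) - us * vs\<bar>) (\<bar>us * vs\<bar> + \<bar>us\<bar> * cv + \<bar>vs\<bar> * cu + 0)"
    by (rule okE_mono[rotated]) (use bnd in \<open>simp add: mult.commute\<close>)
  then show ?thesis by simp
qed



lemma mmul_abs_le:
  assumes "\<forall>l<m. \<bar>Y l k\<bar> \<le> Y' l k"
  shows "\<bar>mmul m X Y i k\<bar> \<le> mmul m (mabs X) Y' i k"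
proof -
  have "\<bar>mmul m X Y i k\<bar> \<le> (\<Sum>l<m. \<bar>X i l * Y l k\<bar>)" unfolding mmul_def by (rule sum_abs)
  also have "\<dots> \<le> (\<Sum>l<m. \<bar>X i l\<bar> * Y' l k)"
    using assms by (intro sum_mono) (auto simp: abs_mult intro: mult_left_mono)
  finally show ?thesis by (simp add: mmul_def mabs_def)
qed

lemma mmul_abs_le2:
  assumes "\<forall>l<m. \<bar>X i l\<bar> \<le> X' i l" "\<forall>l<m. \<bar>Y l k\<bar> \<le> Y' l k"
  shows "\<bar>mmul m X Y i k\<bar> \<le> mmul m X' Y' i k"
proof -
  have "\<bar>mmul m X Y i k\<bar> \<le> (\<Sum>l<m. \<bar>X i l * Y l k\<bar>)" unfolding mmul_def by (rule sum_abs)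
  also have "\<dots> \<le> (\<Sum>l<m. X' i l * Y' l k)"
  proof (rule sum_mono)
    fix l assume "l \<in> {..<m}"
    then have "\<bar>X i l\<bar> \<le> X' i l" "\<bar>Y l k\<bar> \<le> Y' l k" using assms by auto
    then show "\<bar>X i l * Y l k\<bar> \<le> X' i l * Y' l k" unfolding abs_mult
      by (intro mult_mono) auto
  qed
  finally show ?thesis by (simp add: mmul_def)
qed

lemma mmul_nonneg:
  assumes "\<forall>l<m. 0 \<le> X i l" "\<forall>l<m. 0 \<le> Y l k"
  shows "0 \<le> mmul m X Y i k"
  unfolding mmul_def using assms by (auto intro: sum_nonneg)

lemma mmul_nonneg_all:
  assumes "\<And>a b. 0 \<le> X a b" "\<And>a b. 0 \<le> Y a b"
  shows "0 \<le> mmul m X Y i k"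
  unfolding mmul_def using assms by (auto intro: sum_nonneg)

lemma mabs_nonneg: "0 \<le> mabs X i j" by (simp add: mabs_def)

lemma row_hyp:
  fixes dot :: "real \<Rightarrow> nat \<Rightarrow> (nat \<Rightarrow> real) \<Rightarrow> (nat \<Rightarrow> real) \<Rightarrow> real"
    and fl :: "real \<Rightarrow> real \<Rightarrow> real" and C :: "nat \<Rightarrow> nat \<Rightarrow> real" and Fl :: "real \<Rightarrow> real set"
  assumes "\<exists>K e0. 0 < e0 \<and> (\<forall>e\<in>E. e \<le> e0 \<longrightarrow>
        (\<forall>i<r. \<forall>y. (\<forall>k<m. y k \<in> Fl e) \<longrightarrow>
          \<bar>(\<Sum>k<m. C i k * y k) - dot e m (\<lambda>k. fl e (C i k)) y\<bar>
            \<le> (\<Sum>k<m. \<bar>C i k\<bar> * \<bar>y k\<bar>) * (c * e + K * e\<^sup>2)))"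
    and "i < r"
  shows "\<exists>K e0. 0 < e0 \<and> (\<forall>e\<in>E. e \<le> e0 \<longrightarrow> (\<forall>y. (\<forall>k<m. y k \<in> Fl e) \<longrightarrow>
          \<bar>(\<Sum>k<m. C i k * y k) - dot e m (\<lambda>k. fl e (C i k)) y\<bar>
            \<le> (\<Sum>k<m. \<bar>C i k\<bar> * \<bar>y k\<bar>) * (c * e + K * e\<^sup>2)))"
proof -
  obtain K e0 where "0 < e0" "\<forall>e\<in>E. e \<le> e0 \<longrightarrow>
        (\<forall>i<r. \<forall>y. (\<forall>k<m. y k \<in> Fl e) \<longrightarrow>
          \<bar>(\<Sum>k<m. C i k * y k) - dot e m (\<lambda>k. fl e (C i k)) y\<bar>
            \<le> (\<Sum>k<m. \<bar>C i k\<bar> * \<bar>y k\<bar>) * (c * e + K * e\<^sup>2))" using assms(1) by blast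
  then show ?thesis using assms(2) by (intro exI[of _ K] exI[of _ e0]) auto
qed

lemma dot_row_step:
  fixes dot :: "real \<Rightarrow> nat \<Rightarrow> (nat \<Rightarrow> real) \<Rightarrow> (nat \<Rightarrow> real) \<Rightarrow> real"
    and fl :: "real \<Rightarrow> real \<Rightarrow> real" and a :: "nat \<Rightarrow> real" and Fl :: "real \<Rightarrow> real set"
  assumes pos: "\<forall>e\<in>E. 0 < e"
    and hyp: "\<exists>K e0. 0 < e0 \<and> (\<forall>e\<in>E. e \<le> e0 \<longrightarrow> (\<forall>y. (\<forall>k<m. y k \<in> Fl e) \<longrightarrow>
          \<bar>(\<Sum>k<m. a k * y k) - dot e m (\<lambda>k. fl e (a k)) y\<bar>
            \<le> (\<Sum>k<m. \<bar>a k\<bar> * \<bar>y k\<bar>) * (c * e + K * e\<^sup>2)))"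
    and c0: "0 \<le> c"
    and yfl: "\<forall>e\<in>E. \<forall>k<m. y e k \<in> Fl e"
    and yerr: "\<And>k. k < m \<Longrightarrow> okE E (\<lambda>e. \<bar>y e k - ys k\<bar>) (d k)"
  shows "okE E (\<lambda>e. \<bar>dot e m (\<lambda>k. fl e (a k)) (y e) - (\<Sum>k<m. a k * ys k)\<bar>) (\<Sum>k<m. \<bar>a k\<bar> * (c * \<bar>ys k\<bar> + d k))"
  by (rule dot_step[where D="\<lambda>e y. dot e m (\<lambda>k. fl e (a k)) y", OF pos hyp c0 yfl yerr])



lemma entry_bound:
  fixes no nh n :: nat
    and p :: "nat \<Rightarrow> real"
    and E :: "real set"
    and Fl :: "real \<Rightarrow> real set"
    and fl :: "real \<Rightarrow> real \<Rightarrow> real"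
    and dot :: "real \<Rightarrow> nat \<Rightarrow> (nat \<Rightarrow> real) \<Rightarrow> (nat \<Rightarrow> real) \<Rightarrow> real"
    and alpha beta gamma :: real
    and H X :: "nat \<Rightarrow> nat \<Rightarrow> real"
  assumes dims: "n = no + nh - 1"
    and eps_pos: "\<forall>\<epsilon>\<in>E. 0 < \<epsilon>"
    and fl_model: "\<forall>\<epsilon>\<in>E. \<forall>y. \<bar>fl \<epsilon> y - y\<bar> \<le> \<epsilon> * \<bar>y\<bar> \<and> fl \<epsilon> y \<in> Fl \<epsilon>"
    and dot_float: "\<forall>\<epsilon>\<in>E. \<forall>m u y. dot \<epsilon> m u y \<in> Fl \<epsilon>"
    and H_float: "\<forall>\<epsilon>\<in>E. \<forall>i<nh. \<forall>j<nh. H i j \<in> Fl \<epsilon>"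
    and X_float: "\<forall>\<epsilon>\<in>E. \<forall>i<n. \<forall>j<n. X i j \<in> Fl \<epsilon>"
    and alpha_def: "\<exists>K \<epsilon>0. 0 < \<epsilon>0 \<and> (\<forall>\<epsilon>\<in>E. \<epsilon> \<le> \<epsilon>0 \<longrightarrow>
        (\<forall>i<no. \<forall>y. (\<forall>k<n. y k \<in> Fl \<epsilon>) \<longrightarrow>
          \<bar>(\<Sum>k<n. tcAT p i k * y k) - dot \<epsilon> n (\<lambda>k. fl \<epsilon> (tcAT p i k)) y\<bar>
            \<le> (\<Sum>k<n. \<bar>tcAT p i k\<bar> * \<bar>y k\<bar>) * (alpha * \<epsilon> + K * \<epsilon>\<^sup>2)))"
    and beta_def: "\<exists>K \<epsilon>0. 0 < \<epsilon>0 \<and> (\<forall>\<epsilon>\<in>E. \<epsilon> \<le> \<epsilon>0 \<longrightarrow>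
        (\<forall>i<n. \<forall>y. (\<forall>k<n. y k \<in> Fl \<epsilon>) \<longrightarrow>
          \<bar>(\<Sum>k<n. tcBT n p i k * y k) - dot \<epsilon> n (\<lambda>k. fl \<epsilon> (tcBT n p i k)) y\<bar>
            \<le> (\<Sum>k<n. \<bar>tcBT n p i k\<bar> * \<bar>y k\<bar>) * (beta * \<epsilon> + K * \<epsilon>\<^sup>2)))"
    and gamma_def: "\<exists>K \<epsilon>0. 0 < \<epsilon>0 \<and> (\<forall>\<epsilon>\<in>E. \<epsilon> \<le> \<epsilon>0 \<longrightarrow>
        (\<forall>i<n. \<forall>y. (\<forall>k<nh. y k \<in> Fl \<epsilon>) \<longrightarrow>
          \<bar>(\<Sum>k<nh. tcG n p i k * y k) - dot \<epsilon> nh (\<lambda>k. fl \<epsilon> (tcG n p i k)) y\<bar>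
            \<le> (\<Sum>k<nh. \<bar>tcG n p i k\<bar> * \<bar>y k\<bar>) * (gamma * \<epsilon> + K * \<epsilon>\<^sup>2)))"
    and a0: "0 \<le> alpha" and b0: "0 \<le> beta" and g0: "0 \<le> gamma"
    and ij: "i < no" "j < no"
  shows "okE E (\<lambda>\<epsilon>. \<bar>tc_computed (dot \<epsilon>) (fl \<epsilon>) no nh p H X i j - tc_exact no nh p H X i j\<bar>)
     (mmul n (mmul n (mabs (tcAT p))
                    (hprod (mmul nh (mmul nh (mabs (tcG n p)) (mabs H)) (mabs (mtransp (tcG n p))))
                           (mmul n (mmul n (mabs (tcBT n p)) (mabs X)) (mabs (mtransp (tcBT n p))))))
                  (mabs (mtransp (tcAT p))) i j
                 * (2 * alpha + 2 * beta + 2 * gamma + 1))"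
proof -
  define AT where "AT = tcAT p"
  define G where "G = tcG n p"
  define BT where "BT = tcBT n p"
  define Y1 where "Y1 e i j = dot e nh (\<lambda>k. fl e (G i k)) (\<lambda>k. H k j)" for e i j
  define U where "U e i j = dot e nh (\<lambda>k. fl e (G j k)) (\<lambda>k. Y1 e i k)" for e i j
  define Y2 where "Y2 e i j = dot e n (\<lambda>k. fl e (BT i k)) (\<lambda>k. X k j)" for e i j
  define V where "V e i j = dot e n (\<lambda>k. fl e (BT j k)) (\<lambda>k. Y2 e i k)" for e i j
  define W where "W e i j = fl e (U e i j * V e i j)" for e i j
  define Z where "Z e i j = dot e n (\<lambda>k. fl e (AT i k)) (\<lambda>k. W e k j)" for e i j
  define S where "S e i j = dot e n (\<lambda>k. fl e (AT j k)) (\<lambda>k. Z e i k)" for e i j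
  define Gs where "Gs = mmul nh G H"
  define Us where "Us = mmul nh Gs (mtransp G)"
  define Bs where "Bs = mmul n BT X"
  define Vs where "Vs = mmul n Bs (mtransp BT)"
  define M where "M = hprod Us Vs"
  define Zs where "Zs = mmul n AT M"
  define A1 where "A1 = mmul nh (mabs G) (mabs H)"
  define P where "P = mmul nh A1 (mabs (mtransp G))"
  define B1 where "B1 = mmul n (mabs BT) (mabs X)"
  define Q where "Q = mmul n B1 (mabs (mtransp BT))"
  define R where "R = mmul n (mabs AT) (hprod P Q)"
  define T where "T = mmul n R (mabs (mtransp AT))"
  have comp: "tc_computed (dot e) (fl e) no nh p H X i j = S e i j" for e
    unfolding tc_computed_def S_def Z_def W_def U_def V_def Y1_def Y2_def AT_def G_def BT_def
      Let_def flmul_left_def flmul_right_def mtransp_def dims[symmetric] by simp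
  have exact: "tc_exact no nh p H X i j = mmul n Zs (mtransp AT) i j"
    unfolding tc_exact_def Zs_def M_def Us_def Vs_def Gs_def Bs_def AT_def G_def BT_def Let_def dims[symmetric]
    by simp
  have flE: "\<forall>e\<in>E. \<forall>z. \<bar>fl e z - z\<bar> \<le> e * \<bar>z\<bar>" using fl_model by auto
  have st1: "okE E (\<lambda>e. \<bar>Y1 e i j - Gs i j\<bar>) (gamma * A1 i j)" if "i < n" "j < nh" for i j
  proof -
    have "okE E (\<lambda>e. \<bar>dot e nh (\<lambda>k. fl e (G i k)) (\<lambda>k. H k j) - (\<Sum>k<nh. G i k * H k j)\<bar>)
        (\<Sum>k<nh. \<bar>G i k\<bar> * (gamma * \<bar>H k j\<bar> + 0))"
      by (rule dot_row_step[where a="G i" and dot=dot and fl=fl and Fl=Fl and m=nh and E=E, OF eps_pos row_hyp[where C=G and fl=fl and dot=dot and Fl=Fl and E=E, OF gamma_def[folded G_def] that(1)] g0])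
         (use H_float that in \<open>auto intro: okE_zero\<close>)
    then show ?thesis
      by (simp add: Y1_def Gs_def A1_def mmul_def mabs_def sum_distrib_left algebra_simps)
  qed
  have absGs: "\<bar>Gs i k\<bar> \<le> A1 i k" for i k
    unfolding Gs_def A1_def by (rule mmul_abs_le) (simp add: mabs_def)
  have absUs: "\<bar>Us i k\<bar> \<le> P i k" for i k
    unfolding Us_def P_def by (rule mmul_abs_le2) (simp_all add: mabs_def absGs)
  have absBs: "\<bar>Bs i k\<bar> \<le> B1 i k" for i k
    unfolding Bs_def B1_def by (rule mmul_abs_le) (simp add: mabs_def)
  have absVs: "\<bar>Vs i k\<bar> \<le> Q i k" for i k
    unfolding Vs_def Q_def by (rule mmul_abs_le2) (simp_all add: mabs_def absBs)
  have P0: "0 \<le> P i k" for i k using absUs[of i k] by linarith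
  have Q0: "0 \<le> Q i k" for i k using absVs[of i k] by linarith
  have absM: "\<bar>M i k\<bar> \<le> P i k * Q i k" for i k
    unfolding M_def hprod_def abs_mult by (rule mult_mono) (use absUs absVs P0 in auto)
  have absZs: "\<bar>Zs i k\<bar> \<le> R i k" for i k
    unfolding Zs_def R_def by (rule mmul_abs_le) (simp add: hprod_def absM)
  have st2: "okE E (\<lambda>e. \<bar>U e i j - Us i j\<bar>) (2 * gamma * P i j)" if "i < n" "j < n" for i j
  proof -
    have "okE E (\<lambda>e. \<bar>dot e nh (\<lambda>k. fl e (G j k)) (\<lambda>k. Y1 e i k) - (\<Sum>k<nh. G j k * Gs i k)\<bar>)
        (\<Sum>k<nh. \<bar>G j k\<bar> * (gamma * \<bar>Gs i k\<bar> + gamma * A1 i k))"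
      by (rule dot_row_step[where a="G j" and dot=dot and fl=fl and Fl=Fl and m=nh and E=E, OF eps_pos
           row_hyp[where C=G and fl=fl and dot=dot and Fl=Fl and E=E, OF gamma_def[folded G_def] that(2)] g0])
         (use dot_float that in \<open>auto intro: st1[unfolded Y1_def] simp: Y1_def\<close>)
    moreover have "(\<Sum>k<nh. \<bar>G j k\<bar> * (gamma * \<bar>Gs i k\<bar> + gamma * A1 i k)) \<le> 2 * gamma * P i j"
    proof -
      have "(\<Sum>k<nh. \<bar>G j k\<bar> * (gamma * \<bar>Gs i k\<bar> + gamma * A1 i k)) \<le> (\<Sum>k<nh. 2 * gamma * (A1 i k * \<bar>G j k\<bar>))"
      proof (rule sum_mono)
        fix k
        have "gamma * \<bar>Gs i k\<bar> \<le> gamma * A1 i k" using g0 absGs by (simp add: mult_left_mono)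
        then have "\<bar>G j k\<bar> * (gamma * \<bar>Gs i k\<bar> + gamma * A1 i k) \<le> \<bar>G j k\<bar> * (2 * gamma * A1 i k)"
          by (intro mult_left_mono) auto
        then show "\<bar>G j k\<bar> * (gamma * \<bar>Gs i k\<bar> + gamma * A1 i k) \<le> 2 * gamma * (A1 i k * \<bar>G j k\<bar>)"
          by (simp add: algebra_simps)
      qed
      also have "\<dots> = 2 * gamma * P i j" by (simp add: P_def mmul_def mabs_def mtransp_def sum_distrib_left)
      finally show ?thesis .
    qed
    ultimately have "okE E (\<lambda>e. \<bar>dot e nh (\<lambda>k. fl e (G j k)) (\<lambda>k. Y1 e i k) - (\<Sum>k<nh. G j k * Gs i k)\<bar>) (2 * gamma * P i j)"
      using okE_weaken[OF eps_pos] by blast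
    then show ?thesis by (simp add: U_def Us_def mmul_def mtransp_def mult.commute)
  qed
  have st3: "okE E (\<lambda>e. \<bar>Y2 e i j - Bs i j\<bar>) (beta * B1 i j)" if "i < n" "j < n" for i j
  proof -
    have "okE E (\<lambda>e. \<bar>dot e n (\<lambda>k. fl e (BT i k)) (\<lambda>k. X k j) - (\<Sum>k<n. BT i k * X k j)\<bar>)
        (\<Sum>k<n. \<bar>BT i k\<bar> * (beta * \<bar>X k j\<bar> + 0))"
      by (rule dot_row_step[where a="BT i" and dot=dot and fl=fl and Fl=Fl and m=n and E=E, OF eps_pos
           row_hyp[where C=BT and fl=fl and dot=dot and Fl=Fl and E=E, OF beta_def[folded BT_def] that(1)] b0])
         (use X_float that in \<open>auto intro: okE_zero\<close>)
    then show ?thesis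
      by (simp add: Y2_def Bs_def B1_def mmul_def mabs_def sum_distrib_left algebra_simps)
  qed
  have st4: "okE E (\<lambda>e. \<bar>V e i j - Vs i j\<bar>) (2 * beta * Q i j)" if "i < n" "j < n" for i j
  proof -
    have "okE E (\<lambda>e. \<bar>dot e n (\<lambda>k. fl e (BT j k)) (\<lambda>k. Y2 e i k) - (\<Sum>k<n. BT j k * Bs i k)\<bar>)
        (\<Sum>k<n. \<bar>BT j k\<bar> * (beta * \<bar>Bs i k\<bar> + beta * B1 i k))"
      by (rule dot_row_step[where a="BT j" and dot=dot and fl=fl and Fl=Fl and m=n and E=E, OF eps_pos
           row_hyp[where C=BT and fl=fl and dot=dot and Fl=Fl and E=E, OF beta_def[folded BT_def] that(2)] b0])
         (use dot_float that in \<open>auto intro: st3[unfolded Y2_def] simp: Y2_def\<close>)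
    moreover have "(\<Sum>k<n. \<bar>BT j k\<bar> * (beta * \<bar>Bs i k\<bar> + beta * B1 i k)) \<le> 2 * beta * Q i j"
    proof -
      have "(\<Sum>k<n. \<bar>BT j k\<bar> * (beta * \<bar>Bs i k\<bar> + beta * B1 i k)) \<le> (\<Sum>k<n. 2 * beta * (B1 i k * \<bar>BT j k\<bar>))"
      proof (rule sum_mono)
        fix k
        have "beta * \<bar>Bs i k\<bar> \<le> beta * B1 i k" using b0 absBs by (simp add: mult_left_mono)
        then have "\<bar>BT j k\<bar> * (beta * \<bar>Bs i k\<bar> + beta * B1 i k) \<le> \<bar>BT j k\<bar> * (2 * beta * B1 i k)"
          by (intro mult_left_mono) auto
        then show "\<bar>BT j k\<bar> * (beta * \<bar>Bs i k\<bar> + beta * B1 i k) \<le> 2 * beta * (B1 i k * \<bar>BT j k\<bar>)"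
          by (simp add: algebra_simps)
      qed
      also have "\<dots> = 2 * beta * Q i j" by (simp add: Q_def mmul_def mabs_def mtransp_def sum_distrib_left)
      finally show ?thesis .
    qed
    ultimately have "okE E (\<lambda>e. \<bar>dot e n (\<lambda>k. fl e (BT j k)) (\<lambda>k. Y2 e i k) - (\<Sum>k<n. BT j k * Bs i k)\<bar>) (2 * beta * Q i j)"
      using okE_weaken[OF eps_pos] by blast
    then show ?thesis by (simp add: V_def Vs_def mmul_def mtransp_def mult.commute)
  qed
  define c5 where "c5 = 1 + 2 * beta + 2 * gamma"
  have st5: "okE E (\<lambda>e. \<bar>W e i j - M i j\<bar>) (c5 * (P i j * Q i j))" if "i < n" "j < n" for i j
  proof -
    have "okE E (\<lambda>e. \<bar>fl e (U e i j * V e i j) - Us i j * Vs i j\<bar>)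
       (\<bar>Us i j * Vs i j\<bar> + \<bar>Us i j\<bar> * (2 * beta * Q i j) + \<bar>Vs i j\<bar> * (2 * gamma * P i j))"
      by (rule prod_step[OF eps_pos flE st2[OF that] st4[OF that]])
    moreover have "\<bar>Us i j * Vs i j\<bar> + \<bar>Us i j\<bar> * (2 * beta * Q i j) + \<bar>Vs i j\<bar> * (2 * gamma * P i j)
        \<le> c5 * (P i j * Q i j)"
    proof -
      have 1: "\<bar>Us i j * Vs i j\<bar> \<le> P i j * Q i j" using absM[of i j] by (simp add: M_def hprod_def)
      have 2: "\<bar>Us i j\<bar> * (2 * beta * Q i j) \<le> P i j * (2 * beta * Q i j)"
        using absUs b0 Q0 by (intro mult_right_mono) auto
      have 3: "\<bar>Vs i j\<bar> * (2 * gamma * P i j) \<le> Q i j * (2 * gamma * P i j)"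
        using absVs g0 P0 by (intro mult_right_mono) auto
      show ?thesis using 1 2 3 unfolding c5_def by (simp add: algebra_simps)
    qed
    ultimately show ?thesis using okE_weaken[OF eps_pos] by (simp add: W_def M_def hprod_def)
  qed
  define c6 where "c6 = 1 + alpha + 2 * beta + 2 * gamma"
  have st6: "okE E (\<lambda>e. \<bar>Z e i j - Zs i j\<bar>) (c6 * R i j)" if "i < no" "j < n" for i j
  proof -
    have "okE E (\<lambda>e. \<bar>dot e n (\<lambda>k. fl e (AT i k)) (\<lambda>k. W e k j) - (\<Sum>k<n. AT i k * M k j)\<bar>)
        (\<Sum>k<n. \<bar>AT i k\<bar> * (alpha * \<bar>M k j\<bar> + c5 * (P k j * Q k j)))"
      by (rule dot_row_step[where a="AT i" and dot=dot and fl=fl and Fl=Fl and m=n and E=E, OF eps_pos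
           row_hyp[where C=AT and fl=fl and dot=dot and Fl=Fl and E=E, OF alpha_def[folded AT_def] that(1)] a0])
         (use fl_model that in \<open>auto intro: st5[unfolded W_def] simp: W_def\<close>)
    moreover have "(\<Sum>k<n. \<bar>AT i k\<bar> * (alpha * \<bar>M k j\<bar> + c5 * (P k j * Q k j))) \<le> c6 * R i j"
    proof -
      have "(\<Sum>k<n. \<bar>AT i k\<bar> * (alpha * \<bar>M k j\<bar> + c5 * (P k j * Q k j))) \<le> (\<Sum>k<n. c6 * (\<bar>AT i k\<bar> * (P k j * Q k j)))"
      proof (rule sum_mono)
        fix k
        have "alpha * \<bar>M k j\<bar> \<le> alpha * (P k j * Q k j)" using a0 absM by (simp add: mult_left_mono)
        then have "\<bar>AT i k\<bar> * (alpha * \<bar>M k j\<bar> + c5 * (P k j * Q k j)) \<le> \<bar>AT i k\<bar> * (c6 * (P k j * Q k j))"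
          unfolding c5_def c6_def by (intro mult_left_mono) (auto simp: algebra_simps)
        then show "\<bar>AT i k\<bar> * (alpha * \<bar>M k j\<bar> + c5 * (P k j * Q k j)) \<le> c6 * (\<bar>AT i k\<bar> * (P k j * Q k j))"
          by (simp add: algebra_simps)
      qed
      also have "\<dots> = c6 * R i j" by (simp add: R_def mmul_def mabs_def hprod_def sum_distrib_left)
      finally show ?thesis .
    qed
    ultimately have "okE E (\<lambda>e. \<bar>dot e n (\<lambda>k. fl e (AT i k)) (\<lambda>k. W e k j) - (\<Sum>k<n. AT i k * M k j)\<bar>) (c6 * R i j)"
      using okE_weaken[OF eps_pos] by blast
    then show ?thesis by (simp add: Z_def Zs_def mmul_def)
  qed
  define c7 where "c7 = 2 * alpha + 2 * beta + 2 * gamma + 1"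
  have st7: "okE E (\<lambda>e. \<bar>S e i j - mmul n Zs (mtransp AT) i j\<bar>) (T i j * c7)"
  proof -
    have "okE E (\<lambda>e. \<bar>dot e n (\<lambda>k. fl e (AT j k)) (\<lambda>k. Z e i k) - (\<Sum>k<n. AT j k * Zs i k)\<bar>)
        (\<Sum>k<n. \<bar>AT j k\<bar> * (alpha * \<bar>Zs i k\<bar> + c6 * R i k))"
      by (rule dot_row_step[where a="AT j" and dot=dot and fl=fl and Fl=Fl and m=n and E=E, OF eps_pos
           row_hyp[where C=AT and fl=fl and dot=dot and Fl=Fl and E=E, OF alpha_def[folded AT_def] ij(2)] a0])
         (use dot_float ij in \<open>auto intro: st6[unfolded Z_def] simp: Z_def\<close>)
    moreover have "(\<Sum>k<n. \<bar>AT j k\<bar> * (alpha * \<bar>Zs i k\<bar> + c6 * R i k)) \<le> T i j * c7"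
    proof -
      have "(\<Sum>k<n. \<bar>AT j k\<bar> * (alpha * \<bar>Zs i k\<bar> + c6 * R i k)) \<le> (\<Sum>k<n. c7 * (R i k * \<bar>AT j k\<bar>))"
      proof (rule sum_mono)
        fix k
        have "alpha * \<bar>Zs i k\<bar> \<le> alpha * R i k" using a0 absZs by (simp add: mult_left_mono)
        then have "\<bar>AT j k\<bar> * (alpha * \<bar>Zs i k\<bar> + c6 * R i k) \<le> \<bar>AT j k\<bar> * (c7 * R i k)"
          unfolding c6_def c7_def by (intro mult_left_mono) (auto simp: algebra_simps)
        then show "\<bar>AT j k\<bar> * (alpha * \<bar>Zs i k\<bar> + c6 * R i k) \<le> c7 * (R i k * \<bar>AT j k\<bar>)"
          by (simp add: algebra_simps)
      qed
      also have "\<dots> = T i j * c7" by (simp add: T_def mmul_def mabs_def mtransp_def sum_distrib_left mult.commute)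
      finally show ?thesis .
    qed
    ultimately have "okE E (\<lambda>e. \<bar>dot e n (\<lambda>k. fl e (AT j k)) (\<lambda>k. Z e i k) - (\<Sum>k<n. AT j k * Zs i k)\<bar>) (T i j * c7)"
      using okE_weaken[OF eps_pos] by blast
    then show ?thesis by (simp add: S_def mmul_def mtransp_def mult.commute)
  qed
  show ?thesis
    using st7 unfolding comp exact T_def R_def P_def Q_def A1_def B1_def c7_def AT_def G_def BT_def .
qed



lemma okE_fin:
  assumes "finite I" "\<forall>x\<in>I. okE E (f x) (c x)"
  shows "\<exists>K e0. 0 < e0 \<and> (\<forall>e\<in>E. e \<le> e0 \<longrightarrow> (\<forall>x\<in>I. f x e \<le> c x * e + K * e\<^sup>2))"
  using assms
proof (induction I rule: finite_induct)
  case empty then show ?case by (auto intro: exI[of _ 1])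
next
  case (insert x F)
  obtain K1 a where 1: "0 < a" "\<forall>e\<in>E. e \<le> a \<longrightarrow> (\<forall>x\<in>F. f x e \<le> c x * e + K1 * e\<^sup>2)"
    using insert by auto
  obtain K2 b where 2: "0 < b" "\<forall>e\<in>E. e \<le> b \<longrightarrow> f x e \<le> c x * e + K2 * e\<^sup>2"
    using insert.prems unfolding okE_def by auto
  show ?case
  proof (rule exI[of _ "max K1 K2"], rule exI[of _ "min a b"], intro conjI ballI impI)
    show "0 < min a b" using 1 2 by auto
  next
    fix e y assume e: "e \<in> E" "e \<le> min a b" and y: "y \<in> insert x F"
    have "K1 * e\<^sup>2 \<le> max K1 K2 * e\<^sup>2" "K2 * e\<^sup>2 \<le> max K1 K2 * e\<^sup>2"
      by (auto intro: mult_right_mono)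
    then show "f y e \<le> c y * e + max K1 K2 * e\<^sup>2" using 1 2 e y by force
  qed
qed

lemma coef_nonneg:
  fixes a :: "nat \<Rightarrow> real" and D :: "real \<Rightarrow> (nat \<Rightarrow> real) \<Rightarrow> real"
  assumes sm: "\<forall>d>0. \<exists>e\<in>E. e \<le> d" and pos: "\<forall>e\<in>E. 0 < e"
    and fl1: "\<forall>e\<in>E. \<bar>fl e 1 - 1\<bar> \<le> e \<and> fl e 1 \<in> Fl e"
    and hyp: "\<exists>K e0. 0 < e0 \<and> (\<forall>e\<in>E. e \<le> e0 \<longrightarrow> (\<forall>y. (\<forall>k<m. y k \<in> Fl e) \<longrightarrow>
          \<bar>(\<Sum>k<m. a k * y k) - D e y\<bar> \<le> (\<Sum>k<m. \<bar>a k\<bar> * \<bar>y k\<bar>) * (c * e + K * e\<^sup>2)))"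
    and kk: "kz < m" "a kz \<noteq> 0"
  shows "0 \<le> c"
proof (rule ccontr)
  assume c: "\<not> 0 \<le> c"
  obtain K e0 where h: "0 < e0" "\<forall>e\<in>E. e \<le> e0 \<longrightarrow> (\<forall>y. (\<forall>k<m. y k \<in> Fl e) \<longrightarrow>
          \<bar>(\<Sum>k<m. a k * y k) - D e y\<bar> \<le> (\<Sum>k<m. \<bar>a k\<bar> * \<bar>y k\<bar>) * (c * e + K * e\<^sup>2))"
    using hyp by blast
  define d where "d = min e0 (min (1/2) (- c / (2 * \<bar>K\<bar> + 1)))"
  have "0 < - c / (2 * \<bar>K\<bar> + 1)" using c by (intro divide_pos_pos) auto
  then have d0: "0 < d" using h c by (auto simp: d_def)
  then obtain e where e: "e \<in> E" "e \<le> d" using sm by auto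
  have ep: "0 < e" using pos e by auto
  have f1: "fl e 1 \<ge> 1/2" using fl1 e by (auto simp: d_def abs_le_iff)
  define S where "S = (\<Sum>k<m. \<bar>a k\<bar> * \<bar>fl e 1\<bar>)"
  have "\<bar>a kz\<bar> * \<bar>fl e 1\<bar> \<le> S" unfolding S_def
    by (rule member_le_sum[where f="\<lambda>k. \<bar>a k\<bar> * \<bar>fl e 1\<bar>"]) (use kk in auto)
  moreover have "0 < \<bar>a kz\<bar> * \<bar>fl e 1\<bar>" using kk f1 by auto
  ultimately have S0: "0 < S" by linarith
  have "0 \<le> S * (c * e + K * e\<^sup>2)"
    using h(2)[rule_format, of e "\<lambda>k. fl e 1"] e fl1 unfolding S_def d_def by force
  then have "0 \<le> c * e + K * e\<^sup>2" using S0 by (simp add: zero_le_mult_iff)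
  then have "0 \<le> (c + K * e) * e" by (simp add: algebra_simps power2_eq_square)
  then have A: "0 \<le> c + K * e" using ep by (simp add: zero_le_mult_iff)
  have "K * e \<le> \<bar>K\<bar> * e" using ep by (simp add: mult_right_mono)
  also have "\<dots> \<le> \<bar>K\<bar> * (- c / (2 * \<bar>K\<bar> + 1))" using e by (intro mult_left_mono) (auto simp: d_def)
  also have "\<dots> < - c"
  proof -
    have "\<bar>K\<bar> * (- c / (2 * \<bar>K\<bar> + 1)) = (- c) * (\<bar>K\<bar> / (2 * \<bar>K\<bar> + 1))" by simp
    also have "\<dots> < (- c) * 1" using c by (intro mult_strict_left_mono) auto
    finally show ?thesis by simp
  qed
  finally show False using A by linarith
qed

lemma coeff_prod_monic:
  fixes p :: "nat \<Rightarrow> real"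
  assumes "finite S"
  shows "coeff (\<Prod>j\<in>S. [:- p j, 1:]) (card S) = 1"
proof -
  have "degree (\<Prod>j\<in>S. [:- p j, 1:]) = (\<Sum>j\<in>S. degree [:- p j, 1:])"
    by (rule degree_prod_eq_sum_degree) auto
  then have d: "degree (\<Prod>j\<in>S. [:- p j, 1:]) = card S" by simp
  have "lead_coeff (\<Prod>j\<in>S. [:- p j, 1:]) = 1" by (simp add: lead_coeff_prod)
  then show ?thesis using d by simp
qed



lemma col_le_norm1: "j < k \<Longrightarrow> (\<Sum>i<m. \<bar>P i j\<bar>) \<le> norm1 m k P"
  unfolding norm1_def by (rule Max_ge) auto

lemma norm1_le: "0 < k \<Longrightarrow> (\<And>j. j < k \<Longrightarrow> (\<Sum>i<m. \<bar>P i j\<bar>) \<le> B) \<Longrightarrow> norm1 m k P \<le> B"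
  unfolding norm1_def by (rule Max.boundedI) auto

lemma norm1_nonneg: "0 < k \<Longrightarrow> 0 \<le> norm1 m k P"
  using col_le_norm1[where j=0 and k=k and m=m and P=P] by (meson order_trans sum_nonneg abs_ge_zero)

lemma norm1_mabs: "norm1 m k (mabs P) = norm1 m k P"
  by (simp add: norm1_def mabs_def)

lemma frob_mabs: "frob m k (mabs P) = frob m k P"
  by (simp add: frob_def mabs_def)

lemma norm1_mmul:
  assumes "0 < k" "0 < l"
  shows "norm1 m k (mmul l X Y) \<le> norm1 m l X * norm1 l k Y"
proof (rule norm1_le[OF assms(1)])
  fix j assume j: "j < k"
  have "(\<Sum>i<m. \<bar>mmul l X Y i j\<bar>) \<le> (\<Sum>i<m. \<Sum>t<l. \<bar>X i t\<bar> * \<bar>Y t j\<bar>)"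
    unfolding mmul_def by (intro sum_mono order_trans[OF sum_abs]) (simp add: abs_mult)
  also have "\<dots> = (\<Sum>t<l. \<bar>Y t j\<bar> * (\<Sum>i<m. \<bar>X i t\<bar>))"
    by (subst sum.swap) (simp add: sum_distrib_left mult.commute)
  also have "\<dots> \<le> (\<Sum>t<l. \<bar>Y t j\<bar> * norm1 m l X)"
    by (intro sum_mono mult_left_mono col_le_norm1) auto
  also have "\<dots> = norm1 m l X * (\<Sum>t<l. \<bar>Y t j\<bar>)" by (simp add: sum_distrib_left mult.commute)
  also have "\<dots> \<le> norm1 m l X * norm1 l k Y"
    by (intro mult_left_mono col_le_norm1 norm1_nonneg j assms)
  finally show "(\<Sum>i<m. \<bar>mmul l X Y i j\<bar>) \<le> norm1 m l X * norm1 l k Y" .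
qed

lemma sum_abs_mult_le_sqrt:
  fixes a b :: "nat \<Rightarrow> real"
  shows "(\<Sum>i<m. \<bar>a i\<bar> * \<bar>b i\<bar>) \<le> sqrt (\<Sum>i<m. (a i)\<^sup>2) * sqrt (\<Sum>i<m. (b i)\<^sup>2)"
proof -
  have "(\<Sum>i<m. \<bar>a i\<bar> * \<bar>b i\<bar>)\<^sup>2 \<le> (\<Sum>i<m. \<bar>a i\<bar>\<^sup>2) * (\<Sum>i<m. \<bar>b i\<bar>\<^sup>2)"
    by (rule Cauchy_Schwarz_ineq_sum)
  then have "(\<Sum>i<m. \<bar>a i\<bar> * \<bar>b i\<bar>) \<le> sqrt ((\<Sum>i<m. (a i)\<^sup>2) * (\<Sum>i<m. (b i)\<^sup>2))"
    by (intro real_le_rsqrt) simp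
  then show ?thesis by (simp add: real_sqrt_mult)
qed

lemma norm1_hprod:
  assumes "0 < k"
  shows "norm1 m k (hprod P Q) \<le> frob m k P * frob m k Q"
proof (rule norm1_le[OF assms])
  fix j assume j: "j < k"
  have col: "(\<Sum>i<m. (R i j)\<^sup>2) \<le> (\<Sum>i<m. \<Sum>j<k. (R i j)\<^sup>2)" for R :: "nat \<Rightarrow> nat \<Rightarrow> real"
    by (intro sum_mono member_le_sum[where f="\<lambda>j. (R _ j)\<^sup>2"]) (use j in auto)
  have "(\<Sum>i<m. \<bar>hprod P Q i j\<bar>) = (\<Sum>i<m. \<bar>P i j\<bar> * \<bar>Q i j\<bar>)" by (simp add: hprod_def abs_mult)
  also have "\<dots> \<le> sqrt (\<Sum>i<m. (P i j)\<^sup>2) * sqrt (\<Sum>i<m. (Q i j)\<^sup>2)" by (rule sum_abs_mult_le_sqrt)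
  also have "\<dots> \<le> frob m k P * frob m k Q" unfolding frob_def
    by (intro mult_mono real_sqrt_le_mono col) (auto intro!: sum_nonneg)
  finally show "(\<Sum>i<m. \<bar>hprod P Q i j\<bar>) \<le> frob m k P * frob m k Q" .
qed

lemma frob_mmul: "frob m k (mmul l X Y) \<le> frob m l X * frob l k Y"
proof -
  have "(\<Sum>i<m. \<Sum>j<k. (mmul l X Y i j)\<^sup>2) \<le> (\<Sum>i<m. \<Sum>j<k. (\<Sum>t<l. (X i t)\<^sup>2) * (\<Sum>t<l. (Y t j)\<^sup>2))"
    unfolding mmul_def by (intro sum_mono Cauchy_Schwarz_ineq_sum)
  also have "\<dots> = (\<Sum>i<m. \<Sum>t<l. (X i t)\<^sup>2) * (\<Sum>j<k. \<Sum>t<l. (Y t j)\<^sup>2)"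
    by (rule sum_product[symmetric])
  also have "\<dots> = (\<Sum>i<m. \<Sum>t<l. (X i t)\<^sup>2) * (\<Sum>t<l. \<Sum>j<k. (Y t j)\<^sup>2)"
    by (subst sum.swap) rule
  finally show ?thesis unfolding frob_def by (simp add: real_sqrt_mult[symmetric])
qed

lemma frob_nonneg: "0 \<le> frob m k P" by (simp add: frob_def sum_nonneg)

theorem mainTheorem3:
  fixes no nh n :: nat
    and p :: "nat \<Rightarrow> real"
    and E :: "real set"
    and Fl :: "real \<Rightarrow> real set"
    and fl :: "real \<Rightarrow> real \<Rightarrow> real"
    and dot :: "real \<Rightarrow> nat \<Rightarrow> (nat \<Rightarrow> real) \<Rightarrow> (nat \<Rightarrow> real) \<Rightarrow> real"
    and alpha beta gamma :: real
    and H X :: "nat \<Rightarrow> nat \<Rightarrow> real"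
  assumes dims: "1 \<le> no" "1 \<le> nh" "n = no + nh - 1"
    and distinct: "inj_on p {..<n}"
    and eps_pos: "\<forall>\<epsilon>\<in>E. 0 < \<epsilon>"
    and fl_model: "\<forall>\<epsilon>\<in>E. \<forall>y. \<bar>fl \<epsilon> y - y\<bar> \<le> \<epsilon> * \<bar>y\<bar> \<and> fl \<epsilon> y \<in> Fl \<epsilon>"
    and dot_float: "\<forall>\<epsilon>\<in>E. \<forall>m u y. dot \<epsilon> m u y \<in> Fl \<epsilon>"
    and H_float: "\<forall>\<epsilon>\<in>E. \<forall>i<nh. \<forall>j<nh. H i j \<in> Fl \<epsilon>"
    and X_float: "\<forall>\<epsilon>\<in>E. \<forall>i<n. \<forall>j<n. X i j \<in> Fl \<epsilon>"
    and alpha_def: "\<exists>K \<epsilon>0. 0 < \<epsilon>0 \<and> (\<forall>\<epsilon>\<in>E. \<epsilon> \<le> \<epsilon>0 \<longrightarrow>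
        (\<forall>i<no. \<forall>y. (\<forall>k<n. y k \<in> Fl \<epsilon>) \<longrightarrow>
          \<bar>(\<Sum>k<n. tcAT p i k * y k) - dot \<epsilon> n (\<lambda>k. fl \<epsilon> (tcAT p i k)) y\<bar>
            \<le> (\<Sum>k<n. \<bar>tcAT p i k\<bar> * \<bar>y k\<bar>) * (alpha * \<epsilon> + K * \<epsilon>\<^sup>2)))"
    and beta_def: "\<exists>K \<epsilon>0. 0 < \<epsilon>0 \<and> (\<forall>\<epsilon>\<in>E. \<epsilon> \<le> \<epsilon>0 \<longrightarrow>
        (\<forall>i<n. \<forall>y. (\<forall>k<n. y k \<in> Fl \<epsilon>) \<longrightarrow>
          \<bar>(\<Sum>k<n. tcBT n p i k * y k) - dot \<epsilon> n (\<lambda>k. fl \<epsilon> (tcBT n p i k)) y\<bar>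
            \<le> (\<Sum>k<n. \<bar>tcBT n p i k\<bar> * \<bar>y k\<bar>) * (beta * \<epsilon> + K * \<epsilon>\<^sup>2)))"
    and gamma_def: "\<exists>K \<epsilon>0. 0 < \<epsilon>0 \<and> (\<forall>\<epsilon>\<in>E. \<epsilon> \<le> \<epsilon>0 \<longrightarrow>
        (\<forall>i<n. \<forall>y. (\<forall>k<nh. y k \<in> Fl \<epsilon>) \<longrightarrow>
          \<bar>(\<Sum>k<nh. tcG n p i k * y k) - dot \<epsilon> nh (\<lambda>k. fl \<epsilon> (tcG n p i k)) y\<bar>
            \<le> (\<Sum>k<nh. \<bar>tcG n p i k\<bar> * \<bar>y k\<bar>) * (gamma * \<epsilon> + K * \<epsilon>\<^sup>2)))"
  shows "(\<exists>K \<epsilon>0. 0 < \<epsilon>0 \<and> (\<forall>\<epsilon>\<in>E. \<epsilon> \<le> \<epsilon>0 \<longrightarrow> (\<forall>i<no. \<forall>j<no.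
            \<bar>tc_computed (dot \<epsilon>) (fl \<epsilon>) no nh p H X i j - tc_exact no nh p H X i j\<bar>
              \<le> mmul n (mmul n (mabs (tcAT p))
                    (hprod (mmul nh (mmul nh (mabs (tcG n p)) (mabs H)) (mabs (mtransp (tcG n p))))
                           (mmul n (mmul n (mabs (tcBT n p)) (mabs X)) (mabs (mtransp (tcBT n p))))))
                  (mabs (mtransp (tcAT p))) i j
                 * (2 * alpha + 2 * beta + 2 * gamma + 1) * \<epsilon> + K * \<epsilon>\<^sup>2)))
       \<and> (\<exists>K \<epsilon>0. 0 < \<epsilon>0 \<and> (\<forall>\<epsilon>\<in>E. \<epsilon> \<le> \<epsilon>0 \<longrightarrow>
            norm1 no no (\<lambda>i j. tc_computed (dot \<epsilon>) (fl \<epsilon>) no nh p H X i j - tc_exact no nh p H X i j)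
              \<le> norm1 no n (tcAT p) * frob n nh (tcG n p) * frob nh nh H * frob nh n (mtransp (tcG n p))
                 * frob n n (tcBT n p) * frob n n X * frob n n (mtransp (tcBT n p)) * norm1 n no (mtransp (tcAT p))
                 * (2 * alpha + 2 * beta + 2 * gamma + 1) * \<epsilon> + K * \<epsilon>\<^sup>2))"
proof -
  have n0: "0 < n" and no0: "0 < no" and nh0: "0 < nh" using dims by auto
  define Tm where "Tm = mmul n (mmul n (mabs (tcAT p))
                    (hprod (mmul nh (mmul nh (mabs (tcG n p)) (mabs H)) (mabs (mtransp (tcG n p))))
                           (mmul n (mmul n (mabs (tcBT n p)) (mabs X)) (mabs (mtransp (tcBT n p))))))
                  (mabs (mtransp (tcAT p)))"
  define c7 where "c7 = 2 * alpha + 2 * beta + 2 * gamma + 1"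
  define NB where "NB = norm1 no n (tcAT p) * frob n nh (tcG n p) * frob nh nh H * frob nh n (mtransp (tcG n p))
                 * frob n n (tcBT n p) * frob n n X * frob n n (mtransp (tcBT n p)) * norm1 n no (mtransp (tcAT p))"
  define Dl where "Dl e i j = tc_computed (dot e) (fl e) no nh p H X i j - tc_exact no nh p H X i j" for e i j
  show ?thesis
  proof (cases "\<exists>d>0. \<forall>e\<in>E. d < e")
    case True
    then obtain d where d: "0 < d" "\<forall>e\<in>E. d < e" by auto
    then have vac: "\<forall>e\<in>E. \<not> e \<le> d" by force
    show ?thesis
      by (intro conjI; rule exI[of _ 0], rule exI[of _ d]) (use d vac in auto)
  next
    case False
    then have sm: "\<forall>d>0. \<exists>e\<in>E. e \<le> d" by (meson not_le)
    have fl1: "\<forall>e\<in>E. \<bar>fl e 1 - 1\<bar> \<le> e \<and> fl e 1 \<in> Fl e"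
    proof
      fix e assume "e \<in> E"
      then show "\<bar>fl e 1 - 1\<bar> \<le> e \<and> fl e 1 \<in> Fl e" using fl_model[rule_format, of e 1] by simp
    qed
    have a0: "0 \<le> alpha"
      by (rule coef_nonneg[where fl=fl and Fl=Fl and E=E and a="tcAT p 0" and m=n and kz=0 and D="\<lambda>e y. dot e n (\<lambda>k. fl e (tcAT p 0 k)) y",
            OF sm eps_pos fl1 row_hyp[where C="tcAT p" and fl=fl and dot=dot and Fl=Fl and E=E, OF alpha_def no0]])
         (use n0 in \<open>auto simp: tcAT_def\<close>)
    have g0: "0 \<le> gamma"
    proof (rule coef_nonneg[where fl=fl and Fl=Fl and E=E and a="tcG n p 0" and m=nh and kz=0 and D="\<lambda>e y. dot e nh (\<lambda>k. fl e (tcG n p 0 k)) y",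
            OF sm eps_pos fl1 row_hyp[where C="tcG n p" and fl=fl and dot=dot and Fl=Fl and E=E, OF gamma_def n0]])
      show "0 < nh" by (rule nh0)
      have "(\<Prod>j\<in>{..<n} - {0}. (p 0 - p j)) \<noteq> 0"
      proof -
        have "p 0 - p j \<noteq> 0" if "j \<in> {..<n} - {0}" for j
          using distinct that n0 unfolding inj_on_def by fastforce
        then show ?thesis by auto
      qed
      then show "tcG n p 0 0 \<noteq> 0" by (simp add: tcG_def tcN_def)
    qed
    have b0: "0 \<le> beta"
    proof (rule coef_nonneg[where fl=fl and Fl=Fl and E=E and a="tcBT n p (n - 1)" and m=n and kz=0 and D="\<lambda>e y. dot e n (\<lambda>k. fl e (tcBT n p (n - 1) k)) y",
            OF sm eps_pos fl1 row_hyp[where C="tcBT n p" and fl=fl and dot=dot and Fl=Fl and E=E, OF beta_def]])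
      show "n - 1 < n" "0 < n" using n0 by auto
      have "card ({..<n} - {0::nat}) = n - 1" using n0 by simp
      then have "coeff (\<Prod>k\<in>{..<n} - {0}. [:- p k, 1:]) (n - 1) = 1"
        using coeff_prod_monic[of "{..<n} - {0}" p] by simp
      then show "tcBT n p (n - 1) 0 \<noteq> 0" by (simp add: tcBT_def tcM_def)
    qed
    have eb: "\<forall>x\<in>{..<no} \<times> {..<no}. okE E (\<lambda>e. \<bar>Dl e (fst x) (snd x)\<bar>) (Tm (fst x) (snd x) * c7)"
      unfolding Dl_def Tm_def c7_def
      by (auto intro!: entry_bound[OF dims(3) eps_pos fl_model dot_float H_float X_float alpha_def beta_def gamma_def a0 b0 g0])
    obtain K e0 where Ke: "0 < e0" "\<forall>e\<in>E. e \<le> e0 \<longrightarrow> (\<forall>x\<in>{..<no} \<times> {..<no}.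
         \<bar>Dl e (fst x) (snd x)\<bar> \<le> Tm (fst x) (snd x) * c7 * e + K * e\<^sup>2)"
      using okE_fin[OF _ eb] by auto
    have pw: "\<bar>Dl e i j\<bar> \<le> Tm i j * c7 * e + K * e\<^sup>2" if "e \<in> E" "e \<le> e0" "i < no" "j < no" for e i j
      using Ke that by fastforce
    have c70: "0 \<le> c7" using a0 b0 g0 by (simp add: c7_def)
    have TmNB: "norm1 no no Tm \<le> NB"
    proof -
      define P where "P = mmul nh (mmul nh (mabs (tcG n p)) (mabs H)) (mabs (mtransp (tcG n p)))"
      define Q where "Q = mmul n (mmul n (mabs (tcBT n p)) (mabs X)) (mabs (mtransp (tcBT n p)))"
      have "norm1 no no Tm \<le> norm1 no n (mmul n (mabs (tcAT p)) (hprod P Q)) * norm1 n no (mabs (mtransp (tcAT p)))"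
        unfolding Tm_def P_def Q_def by (rule norm1_mmul[OF no0 n0])
      also have "\<dots> \<le> (norm1 no n (mabs (tcAT p)) * norm1 n n (hprod P Q)) * norm1 n no (mabs (mtransp (tcAT p)))"
        by (intro mult_right_mono norm1_mmul norm1_nonneg n0 no0)
      also have "\<dots> \<le> (norm1 no n (tcAT p) * (frob n n P * frob n n Q)) * norm1 n no (mtransp (tcAT p))"
        unfolding norm1_mabs
        by (intro mult_right_mono mult_left_mono norm1_hprod norm1_nonneg n0 no0)
      finally have T1: "norm1 no no Tm \<le> norm1 no n (tcAT p) * (frob n n P * frob n n Q) * norm1 n no (mtransp (tcAT p))" .
      have fP: "frob n n P \<le> frob n nh (tcG n p) * frob nh nh H * frob nh n (mtransp (tcG n p))"
      proof -
        have "frob n n P \<le> frob n nh (mmul nh (mabs (tcG n p)) (mabs H)) * frob nh n (mabs (mtransp (tcG n p)))"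
          unfolding P_def by (rule frob_mmul)
        also have "\<dots> \<le> (frob n nh (mabs (tcG n p)) * frob nh nh (mabs H)) * frob nh n (mabs (mtransp (tcG n p)))"
          by (intro mult_right_mono frob_mmul frob_nonneg)
        finally show ?thesis unfolding frob_mabs .
      qed
      have fQ: "frob n n Q \<le> frob n n (tcBT n p) * frob n n X * frob n n (mtransp (tcBT n p))"
      proof -
        have "frob n n Q \<le> frob n n (mmul n (mabs (tcBT n p)) (mabs X)) * frob n n (mabs (mtransp (tcBT n p)))"
          unfolding Q_def by (rule frob_mmul)
        also have "\<dots> \<le> (frob n n (mabs (tcBT n p)) * frob n n (mabs X)) * frob n n (mabs (mtransp (tcBT n p)))"
          by (intro mult_right_mono frob_mmul frob_nonneg)
        finally show ?thesis unfolding frob_mabs .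
      qed
      have "frob n n P * frob n n Q \<le> (frob n nh (tcG n p) * frob nh nh H * frob nh n (mtransp (tcG n p)))
             * (frob n n (tcBT n p) * frob n n X * frob n n (mtransp (tcBT n p)))"
        by (rule mult_mono[OF fP fQ]) (auto intro: frob_nonneg mult_nonneg_nonneg)
      then have "norm1 no n (tcAT p) * (frob n n P * frob n n Q) * norm1 n no (mtransp (tcAT p))
          \<le> norm1 no n (tcAT p) * ((frob n nh (tcG n p) * frob nh nh H * frob nh n (mtransp (tcG n p)))
             * (frob n n (tcBT n p) * frob n n X * frob n n (mtransp (tcBT n p)))) * norm1 n no (mtransp (tcAT p))"
        by (intro mult_right_mono mult_left_mono norm1_nonneg n0 no0)
      with T1 show ?thesis unfolding NB_def by (simp add: mult_ac)
    qed
    show ?thesis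
    proof (intro conjI)
      show "\<exists>K \<epsilon>0. 0 < \<epsilon>0 \<and> (\<forall>\<epsilon>\<in>E. \<epsilon> \<le> \<epsilon>0 \<longrightarrow> (\<forall>i<no. \<forall>j<no.
            \<bar>tc_computed (dot \<epsilon>) (fl \<epsilon>) no nh p H X i j - tc_exact no nh p H X i j\<bar>
              \<le> mmul n (mmul n (mabs (tcAT p))
                    (hprod (mmul nh (mmul nh (mabs (tcG n p)) (mabs H)) (mabs (mtransp (tcG n p))))
                           (mmul n (mmul n (mabs (tcBT n p)) (mabs X)) (mabs (mtransp (tcBT n p))))))
                  (mabs (mtransp (tcAT p))) i j
                 * (2 * alpha + 2 * beta + 2 * gamma + 1) * \<epsilon> + K * \<epsilon>\<^sup>2))"
        using pw Ke(1) unfolding Dl_def Tm_def c7_def by blast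
      show "\<exists>K \<epsilon>0. 0 < \<epsilon>0 \<and> (\<forall>\<epsilon>\<in>E. \<epsilon> \<le> \<epsilon>0 \<longrightarrow>
            norm1 no no (\<lambda>i j. tc_computed (dot \<epsilon>) (fl \<epsilon>) no nh p H X i j - tc_exact no nh p H X i j)
              \<le> norm1 no n (tcAT p) * frob n nh (tcG n p) * frob nh nh H * frob nh n (mtransp (tcG n p))
                 * frob n n (tcBT n p) * frob n n X * frob n n (mtransp (tcBT n p)) * norm1 n no (mtransp (tcAT p))
                 * (2 * alpha + 2 * beta + 2 * gamma + 1) * \<epsilon> + K * \<epsilon>\<^sup>2)"
      proof (rule exI[of _ "real no * K"], rule exI[of _ e0], intro conjI ballI impI)
        show "0 < e0" by (rule Ke(1))
        fix e assume e: "e \<in> E" "e \<le> e0"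
        have ep: "0 < e" using eps_pos e by auto
        have "norm1 no no (Dl e) \<le> NB * c7 * e + real no * K * e\<^sup>2"
        proof (rule norm1_le[OF no0])
          fix j assume j: "j < no"
          have "(\<Sum>i<no. \<bar>Dl e i j\<bar>) \<le> (\<Sum>i<no. Tm i j * c7 * e + K * e\<^sup>2)"
            by (rule sum_mono) (use pw e j in auto)
          also have "\<dots> = (\<Sum>i<no. \<bar>Tm i j\<bar>) * (c7 * e) + real no * K * e\<^sup>2"
          proof -
            have "Tm i j = \<bar>Tm i j\<bar>" for i
              unfolding Tm_def by (intro abs_of_nonneg[symmetric]) (auto simp: mabs_def hprod_def intro!: mmul_nonneg_all mult_nonneg_nonneg)
            then show ?thesis by (simp add: sum.distrib sum_distrib_right sum_distrib_left algebra_simps)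
          qed
          also have "\<dots> \<le> norm1 no no Tm * (c7 * e) + real no * K * e\<^sup>2"
            using c70 ep by (intro add_right_mono mult_right_mono col_le_norm1 j) auto
          also have "\<dots> \<le> NB * (c7 * e) + real no * K * e\<^sup>2"
            using c70 ep TmNB by (intro add_right_mono mult_right_mono) auto
          finally show "(\<Sum>i<no. \<bar>Dl e i j\<bar>) \<le> NB * c7 * e + real no * K * e\<^sup>2" by (simp add: mult.assoc)
        qed
        then show "norm1 no no (\<lambda>i j. tc_computed (dot e) (fl e) no nh p H X i j - tc_exact no nh p H X i j)
              \<le> norm1 no n (tcAT p) * frob n nh (tcG n p) * frob nh nh H * frob nh n (mtransp (tcG n p))
                 * frob n n (tcBT n p) * frob n n X * frob n n (mtransp (tcBT n p)) * norm1 n no (mtransp (tcAT p))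
                 * (2 * alpha + 2 * beta + 2 * gamma + 1) * e + real no * K * e\<^sup>2"
          unfolding NB_def c7_def Dl_def[abs_def] by simp
      qed
    qed
  qed
qed

end
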